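(* Let $H$ and $I$ be $r$-element subsets of $[n]$ with $H\le I$. (i) If $P,Q$ are $x$-element subsets of $[r]$ with $P\le Q$, then $H_P\le I_Q$ (as $x$-element subsets of $[n]$). (ii) If $P,Q$ are $y$-element subsets of $[n-r]$ with $P\le Q$, then $H^+_P\le I^+_Q$ (as $(r+y)$-element subsets of $[n]$).
   Context: $[n]=\{1,\dots,n\}$; subsets are written in increasing order. For $k$-element subsets $H=\{h_1<\dots<h_k\}$, $I=\{i_1<\dots<i_k\}$ of $[n]$, $H\le I$ means $h_a\le i_a$ for all $1\le a\le k$. For $I=\{i_1<\dots<i_r\}$ and $P=\{p_1<\dots<p_x\}\subseteq[r]$, $I_P=\{i_{p_1}<\dots<i_{p_x}\}$. For $P\subseteq[n-r]$ of cardinality $y$, $I^+_P=I\cup(I^c)_P$, where $I^c=[n]\setminus I$ written increasingly as $\{i^c_1<\dots<i^c_{n-r}\}$ and $(I^c)_P=\{i^c_{p}:p\in P\}$. *)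

theory Defs
  imports Main
begin

definition elt :: "nat set \<Rightarrow> nat \<Rightarrow> nat" where
  "elt S a = sorted_list_of_set S ! (a - 1)"

definition gale_le :: "nat set \<Rightarrow> nat set \<Rightarrow> bool" where
  "gale_le H I \<longleftrightarrow> card H = card I \<and> (\<forall>a\<in>{1..card H}. elt H a \<le> elt I a)"

definition sub_sel :: "nat set \<Rightarrow> nat set \<Rightarrow> nat set" where
  "sub_sel I P = (\<lambda>p. elt I p) ` P"

definition plus_sel :: "nat \<Rightarrow> nat set \<Rightarrow> nat set \<Rightarrow> nat set" where
  "plus_sel n I P = I \<union> sub_sel ({1..n} - I) P"

end

theory Submission
  imports Defs
begin
definition cnt :: "nat set \<Rightarrow> nat \<Rightarrow> nat" where
  "cnt S t = card {s\<in>S. s \<le> t}"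

lemma elt_in: "finite S \<Longrightarrow> a \<in> {1..card S} \<Longrightarrow> elt S a \<in> S"
proof -
  assume f: "finite S" and a: "a \<in> {1..card S}"
  have "a - 1 < length (sorted_list_of_set S)" using a f by auto
  then show ?thesis unfolding elt_def using f by (metis nth_mem set_sorted_list_of_set)
qed

lemma elt_less: "finite S \<Longrightarrow> 1 \<le> a \<Longrightarrow> a < b \<Longrightarrow> b \<le> card S \<Longrightarrow> elt S a < elt S b"
proof -
  assume f: "finite S" and h: "1 \<le> a" "a < b" "b \<le> card S"
  have "a - 1 < b - 1" "b - 1 < length (sorted_list_of_set S)" using h f by auto
  from sorted_wrt_nth_less[OF strict_sorted_list_of_set this]
  show ?thesis unfolding elt_def .
qed

lemma elt_mono_iff: "finite S \<Longrightarrow> a \<in> {1..card S} \<Longrightarrow> b \<in> {1..card S} \<Longrightarrow>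
   elt S a \<le> elt S b \<longleftrightarrow> a \<le> b"
proof -
  assume f: "finite S" and a: "a \<in> {1..card S}" and b: "b \<in> {1..card S}"
  show ?thesis
  proof (cases a b rule: linorder_cases)
    case less then show ?thesis using elt_less[OF f, of a b] a b by simp
  next
    case greater then show ?thesis using elt_less[OF f, of b a] a b by simp
  qed simp
qed

lemma elt_inj: "finite S \<Longrightarrow> inj_on (elt S) {1..card S}"
proof (rule inj_onI)
  fix x y assume f: "finite S" and x: "x \<in> {1..card S}" and y: "y \<in> {1..card S}"
    and e: "elt S x = elt S y"
  have "x \<le> y" using elt_mono_iff[OF f x y] e by simp
  moreover have "y \<le> x" using elt_mono_iff[OF f y x] e by simp
  ultimately show "x = y" by simp
qed

lemma elt_image: "finite S \<Longrightarrow> elt S ` {1..card S} = S"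
proof -
  assume f: "finite S"
  have sub: "elt S ` {1..card S} \<subseteq> S" using elt_in[OF f] by auto
  have "card (elt S ` {1..card S}) = card S"
    using card_image[OF elt_inj[OF f]] by simp
  then show ?thesis using sub f by (simp add: card_subset_eq)
qed

lemma cnt_elt_set: "finite S \<Longrightarrow> cnt S t = card {j\<in>{1..card S}. elt S j \<le> t}"
proof -
  assume f: "finite S"
  have "{s\<in>S. s \<le> t} = elt S ` {j\<in>{1..card S}. elt S j \<le> t}"
  proof
    show "{s\<in>S. s \<le> t} \<subseteq> elt S ` {j\<in>{1..card S}. elt S j \<le> t}"
    proof
      fix s assume "s \<in> {s\<in>S. s \<le> t}"
      then obtain j where "j \<in> {1..card S}" "s = elt S j" "s \<le> t"
        using elt_image[OF f] by (metis (no_types, lifting) imageE mem_Collect_eq)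
      then show "s \<in> elt S ` {j\<in>{1..card S}. elt S j \<le> t}" by blast
    qed
  qed (use elt_in[OF f] in auto)
  moreover have "inj_on (elt S) {j\<in>{1..card S}. elt S j \<le> t}"
    using elt_inj[OF f] by (rule inj_on_subset) auto
  ultimately show ?thesis unfolding cnt_def by (simp add: card_image)
qed

lemma elt_le_iff: "finite S \<Longrightarrow> j \<in> {1..card S} \<Longrightarrow> elt S j \<le> t \<longleftrightarrow> j \<le> cnt S t"
proof -
  assume f: "finite S" and j: "j \<in> {1..card S}"
  let ?A = "{j\<in>{1..card S}. elt S j \<le> t}"
  show ?thesis
  proof
    assume jt: "elt S j \<le> t"
    have "{1..j} \<subseteq> ?A"
    proof
      fix i assume i: "i \<in> {1..j}"
      then have i': "i \<in> {1..card S}" using j by simp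
      have "elt S i \<le> elt S j" using elt_mono_iff[OF f i' j] i by simp
      then show "i \<in> ?A" using i' jt by simp
    qed
    then have "card {1..j} \<le> card ?A" by (intro card_mono) auto
    then show "j \<le> cnt S t" using cnt_elt_set[OF f] by simp
  next
    assume h: "j \<le> cnt S t"
    show "elt S j \<le> t"
    proof (rule ccontr)
      assume nt: "\<not> elt S j \<le> t"
      have "?A \<subseteq> {1..j-1}"
      proof
        fix i assume i: "i \<in> ?A"
        then have i': "i \<in> {1..card S}" by simp
        have "elt S i \<le> t" using i by simp
        then have "\<not> elt S j \<le> elt S i" using nt by simp
        then have "\<not> j \<le> i" using elt_mono_iff[OF f j i'] by simp
        then show "i \<in> {1..j-1}" using i' by simp
      qed
      then have "card ?A \<le> card {1..j-1}" by (intro card_mono) auto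
      then have c1: "card ?A \<le> j - 1" by simp
      have c2: "j \<le> card ?A" using h cnt_elt_set[OF f] by simp
      have "1 \<le> j" using j by simp
      then show False using c1 c2 by linarith
    qed
  qed
qed

lemma cnt_le_card: "finite S \<Longrightarrow> cnt S t \<le> card S"
  unfolding cnt_def by (intro card_mono) auto

lemma gale_cnt:
  assumes "finite A" "finite B" "card A = card B"
  shows "gale_le A B \<longleftrightarrow> (\<forall>t. cnt B t \<le> cnt A t)"
proof
  assume g: "gale_le A B"
  show "\<forall>t. cnt B t \<le> cnt A t"
  proof
    fix t
    let ?m = "cnt B t"
    show "?m \<le> cnt A t"
    proof (cases "?m = 0")
      case False
      have mr: "?m \<in> {1..card B}" using False cnt_le_card[OF assms(2)] by auto
      then have "elt B ?m \<le> t" using elt_le_iff[OF assms(2) mr] by simp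
      moreover have "elt A ?m \<le> elt B ?m" using g mr assms(3) unfolding gale_le_def by auto
      ultimately have "elt A ?m \<le> t" by linarith
      moreover have mrA: "?m \<in> {1..card A}" using mr assms(3) by simp
      ultimately show ?thesis using elt_le_iff[OF assms(1) mrA] by simp
    qed simp
  qed
next
  assume c: "\<forall>t. cnt B t \<le> cnt A t"
  show "gale_le A B" unfolding gale_le_def
  proof (intro conjI ballI)
    fix a assume a: "a \<in> {1..card A}"
    have "a \<le> cnt B (elt B a)" using elt_le_iff[OF assms(2), of a "elt B a"] a assms(3) by simp
    then have "a \<le> cnt A (elt B a)" using c le_trans by blast
    then show "elt A a \<le> elt B a" using elt_le_iff[OF assms(1) a] by simp
  qed (rule assms(3))
qed

lemma sub_sel_card: "finite S \<Longrightarrow> P \<subseteq> {1..card S} \<Longrightarrow> card (sub_sel S P) = card P"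
  unfolding sub_sel_def using elt_inj
  by (metis card_image inj_on_subset)

lemma sub_sel_finite: "finite P \<Longrightarrow> finite (sub_sel S P)"
  unfolding sub_sel_def by simp

lemma sub_sel_cnt:
  assumes f: "finite S" and P: "P \<subseteq> {1..card S}"
  shows "cnt (sub_sel S P) t = cnt P (cnt S t)"
proof -
  have "{s\<in>sub_sel S P. s \<le> t} = elt S ` {p\<in>P. p \<le> cnt S t}"
    unfolding sub_sel_def using P elt_le_iff[OF f] by auto
  moreover have "inj_on (elt S) {p\<in>P. p \<le> cnt S t}"
    using elt_inj[OF f] by (rule inj_on_subset) (use P in auto)
  ultimately show ?thesis unfolding cnt_def by (simp add: card_image)
qed

lemma cnt_mono: "finite S \<Longrightarrow> t \<le> u \<Longrightarrow> cnt S t \<le> cnt S u"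
  unfolding cnt_def by (intro card_mono) auto

lemma cnt_shift: "finite S \<Longrightarrow> cnt S (u + d) \<le> cnt S u + d"
proof -
  assume f: "finite S"
  have "{s\<in>S. s \<le> u + d} \<subseteq> {s\<in>S. s \<le> u} \<union> {u<..u+d}" by auto
  then have "cnt S (u+d) \<le> card ({s\<in>S. s \<le> u} \<union> {u<..u+d})"
    unfolding cnt_def by (intro card_mono) (use f in auto)
  also have "\<dots> \<le> cnt S u + card {u<..u+d}" unfolding cnt_def by (rule card_Un_le)
  finally show ?thesis by simp
qed

lemma cnt_union: "finite A \<Longrightarrow> finite B \<Longrightarrow> A \<inter> B = {} \<Longrightarrow> cnt (A \<union> B) t = cnt A t + cnt B t"
  unfolding cnt_def
  by (subst card_Un_disjoint[symmetric]) (auto intro: arg_cong[where f=card])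

lemma cnt_interval: "cnt {1..n} t = min t n"
proof -
  have "{s\<in>{1..n}. s \<le> t} = {1..min t n}" by auto
  then show ?thesis unfolding cnt_def by simp
qed

lemma cnt_compl: "S \<subseteq> {1..n} \<Longrightarrow> cnt ({1..n} - S) t = min t n - cnt S t"
proof -
  assume s: "S \<subseteq> {1..n}"
  have f: "finite S" using s finite_subset by blast
  have "cnt {1..n} t = cnt S t + cnt ({1..n} - S) t"
    using cnt_union[OF f, of "{1..n} - S" t] s by (simp add: Un_absorb1 Un_Diff_cancel)
  then show ?thesis using cnt_interval by simp
qed

lemma plus_cnt:
  assumes s: "S \<subseteq> {1..n}" and P: "P \<subseteq> {1..n - card S}"
  shows "cnt (plus_sel n S P) t = cnt S t + cnt P (min t n - cnt S t)"
    and "card (plus_sel n S P) = card S + card P"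
    and "finite (plus_sel n S P)"
proof -
  have f: "finite S" using s finite_subset by blast
  have cc: "card ({1..n} - S) = n - card S" using s by (simp add: card_Diff_subset f)
  have P': "P \<subseteq> {1..card ({1..n} - S)}" using P cc by simp
  have fP: "finite P" using P finite_subset by blast
  have d: "S \<inter> sub_sel ({1..n} - S) P = {}"
    unfolding sub_sel_def using elt_in[of "{1..n} - S"] P' by auto
  have fs: "finite (sub_sel ({1..n} - S) P)" using fP sub_sel_finite by blast
  show "cnt (plus_sel n S P) t = cnt S t + cnt P (min t n - cnt S t)"
    unfolding plus_sel_def
    using cnt_union[OF f fs d] sub_sel_cnt[OF _ P'] cnt_compl[OF s] by simp
  show "card (plus_sel n S P) = card S + card P"
    unfolding plus_sel_def using card_Un_disjoint[OF f fs d] sub_sel_card[OF _ P'] by simp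
  show "finite (plus_sel n S P)" unfolding plus_sel_def using f fs by simp
qed

theorem lemma1:
  fixes n r :: nat and H I :: "nat set"
  assumes "H \<subseteq> {1..n}" and "I \<subseteq> {1..n}"
    and "card H = r" and "card I = r"
    and "gale_le H I"
  shows "(\<forall>x P Q. P \<subseteq> {1..r} \<and> Q \<subseteq> {1..r} \<and> card P = x \<and> card Q = x \<and> gale_le P Q
            \<longrightarrow> card (sub_sel H P) = x \<and> card (sub_sel I Q) = x
                \<and> gale_le (sub_sel H P) (sub_sel I Q))
       \<and> (\<forall>y P Q. P \<subseteq> {1..n - r} \<and> Q \<subseteq> {1..n - r} \<and> card P = y \<and> card Q = y \<and> gale_le P Q
            \<longrightarrow> card (plus_sel n H P) = r + y \<and> card (plus_sel n I Q) = r + y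
                \<and> gale_le (plus_sel n H P) (plus_sel n I Q))"
proof -
  have fH: "finite H" using assms(1) finite_subset by blast
  have fI: "finite I" using assms(2) finite_subset by blast
  have HI: "\<And>t. cnt I t \<le> cnt H t" using gale_cnt[OF fH fI] assms by simp
  show ?thesis
  proof (intro conjI allI impI; elim conjE)
    fix x P Q assume P: "P \<subseteq> {1..r}" and Q: "Q \<subseteq> {1..r}" and cP: "card P = x"
      and cQ: "card Q = x" and PQ: "gale_le P Q"
    have fP: "finite P" using P finite_subset by blast
    have fQ: "finite Q" using Q finite_subset by blast
    have PQc: "\<And>t. cnt Q t \<le> cnt P t" using gale_cnt[OF fP fQ] cP cQ PQ by simp
    have P': "P \<subseteq> {1..card H}" and Q': "Q \<subseteq> {1..card I}" using P Q assms by auto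
    show "card (sub_sel H P) = x" using sub_sel_card[OF fH P'] cP by simp
    show "card (sub_sel I Q) = x" using sub_sel_card[OF fI Q'] cQ by simp
    have "\<And>t. cnt (sub_sel I Q) t \<le> cnt (sub_sel H P) t"
    proof -
      fix t
      have "cnt (sub_sel I Q) t = cnt Q (cnt I t)" by (rule sub_sel_cnt[OF fI Q'])
      also have "\<dots> \<le> cnt Q (cnt H t)" by (rule cnt_mono[OF fQ HI])
      also have "\<dots> \<le> cnt P (cnt H t)" by (rule PQc)
      also have "\<dots> = cnt (sub_sel H P) t" by (rule sub_sel_cnt[OF fH P', symmetric])
      finally show "cnt (sub_sel I Q) t \<le> cnt (sub_sel H P) t" .
    qed
    then show "gale_le (sub_sel H P) (sub_sel I Q)"
      using gale_cnt[OF sub_sel_finite[OF fP] sub_sel_finite[OF fQ]]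
        sub_sel_card[OF fH P'] sub_sel_card[OF fI Q'] cP cQ by simp
  next
    fix y P Q assume P: "P \<subseteq> {1..n - r}" and Q: "Q \<subseteq> {1..n - r}" and cP: "card P = y"
      and cQ: "card Q = y" and PQ: "gale_le P Q"
    have fP: "finite P" using P finite_subset by blast
    have fQ: "finite Q" using Q finite_subset by blast
    have PQc: "\<And>t. cnt Q t \<le> cnt P t" using gale_cnt[OF fP fQ] cP cQ PQ by simp
    have P': "P \<subseteq> {1..n - card H}" and Q': "Q \<subseteq> {1..n - card I}" using P Q assms by auto
    note pH = plus_cnt[OF assms(1) P'] and pI = plus_cnt[OF assms(2) Q']
    show "card (plus_sel n H P) = r + y" using pH(2) assms cP by simp
    show "card (plus_sel n I Q) = r + y" using pI(2) assms cQ by simp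
    have "\<And>t. cnt (plus_sel n I Q) t \<le> cnt (plus_sel n H P) t"
    proof -
      fix t
      define m where "m = min t n"
      have hm: "cnt H t \<le> m"
      proof -
        have "cnt H t \<le> cnt {1..n} t" unfolding cnt_def
          by (intro card_mono) (use assms(1) in auto)
        then show ?thesis unfolding m_def cnt_interval .
      qed
      have e: "m - cnt I t = (m - cnt H t) + (cnt H t - cnt I t)" using hm HI[of t] by simp
      have "cnt Q (m - cnt I t) \<le> cnt Q (m - cnt H t) + (cnt H t - cnt I t)"
        unfolding e by (rule cnt_shift[OF fQ])
      also have "\<dots> \<le> cnt P (m - cnt H t) + (cnt H t - cnt I t)" using PQc by simp
      finally have "cnt I t + cnt Q (m - cnt I t) \<le> cnt H t + cnt P (m - cnt H t)"
        using HI[of t] by simp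
      then show "cnt (plus_sel n I Q) t \<le> cnt (plus_sel n H P) t"
        using pH(1) pI(1) m_def by simp
    qed
    then show "gale_le (plus_sel n H P) (plus_sel n I Q)"
      using gale_cnt[OF pH(3) pI(3)] pH(2) pI(2) assms cP cQ by simp
  qed
qed

end
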